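(* Every linear flow is parabolic or hyperbolic.
   Context: A linear flow is an injective homomorphism $\Phi:\mathbb{R}\to\mathrm{PGL}(n+1,\mathbb{R})$ such that the orbit of every point of $\mathbb{RP}^n$ is a proper subset of a projective line. A reparameterization of $\Phi$ is $\Phi\circ\phi$ for an isomorphism $\phi:\mathbb{R}\to\mathbb{R}$. A linear flow is parabolic if, after reparameterization, there is $\pi\in\mathrm{End}(\mathbb{R}^{n+1})$ with $\pi^2=0$ and $\Phi_t[x]=[x+t\pi(x)]$ for all $t$ and $x$. It is hyperbolic if, after reparameterization, there is a direct sum decomposition $\mathbb{R}^{n+1}=A\oplus B$ with $\Phi_t[a+b]=[a+e^t b]$ for all $a\in A$, $b\in B$, $t\in\mathbb{R}$. *)

theory Defs
  imports "HOL-Analysis.Analysis"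
begin

text \<open>Vectors of \<open>real ^ 'n\<close> model R^(n+1); a point of RP^n is the class [x] of a
nonzero vector x.\<close>

definition proj_eq :: "real ^ 'n \<Rightarrow> real ^ 'n \<Rightarrow> bool" where
  "proj_eq x y \<longleftrightarrow> (\<exists>c. c \<noteq> 0 \<and> x = c *\<^sub>R y)"

text \<open>A map \<open>\<Phi> : R \<rightarrow> PGL(n+1,R)\<close> is given by a (continuous) lift
\<open>M : R \<rightarrow> GL(n+1,R)\<close>, with \<open>\<Phi>_t = [M t]\<close>, so \<open>\<Phi>_t [x] = [M t *v x]\<close>.\<close>

definition is_proj_hom :: "(real \<Rightarrow> real ^ 'n ^ 'n) \<Rightarrow> bool" where
  "is_proj_hom M \<longleftrightarrow>
     (\<forall>t. invertible (M t)) \<and>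
     (\<forall>s t. \<exists>c. c \<noteq> 0 \<and> M (s + t) = c *\<^sub>R (M s ** M t))"

definition proj_injective :: "(real \<Rightarrow> real ^ 'n ^ 'n) \<Rightarrow> bool" where
  "proj_injective M \<longleftrightarrow> (\<forall>s t. (\<exists>c. c \<noteq> 0 \<and> M s = c *\<^sub>R M t) \<longrightarrow> s = t)"

text \<open>The orbit of [x] is a proper subset of a projective line P (P a 2-dim subspace).\<close>
definition orbit_in_proper_line :: "(real \<Rightarrow> real ^ 'n ^ 'n) \<Rightarrow> real ^ 'n \<Rightarrow> bool" where
  "orbit_in_proper_line M x \<longleftrightarrow>
     (\<exists>P. subspace P \<and> dim P = 2 \<and> (\<forall>t. M t *v x \<in> P) \<and>
          (\<exists>y\<in>P. y \<noteq> 0 \<and> (\<forall>t. \<not> proj_eq y (M t *v x))))"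

definition linear_flow :: "(real \<Rightarrow> real ^ 'n ^ 'n) \<Rightarrow> bool" where
  "linear_flow M \<longleftrightarrow>
     continuous_on UNIV M \<and> is_proj_hom M \<and> proj_injective M \<and>
     (\<forall>x. x \<noteq> 0 \<longrightarrow> orbit_in_proper_line M x)"

definition reparam :: "(real \<Rightarrow> real) \<Rightarrow> bool" where
  "reparam \<phi> \<longleftrightarrow> bij \<phi> \<and> continuous_on UNIV \<phi> \<and> (\<forall>s t. \<phi> (s + t) = \<phi> s + \<phi> t)"

definition parabolic :: "(real \<Rightarrow> real ^ 'n ^ 'n) \<Rightarrow> bool" where
  "parabolic M \<longleftrightarrow>
     (\<exists>\<phi> \<pi>. reparam \<phi> \<and> \<pi> ** \<pi> = 0 \<and>
        (\<forall>t x. x \<noteq> 0 \<longrightarrow> proj_eq (M (\<phi> t) *v x) (x + t *\<^sub>R (\<pi> *v x))))"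

definition hyperbolic :: "(real \<Rightarrow> real ^ 'n ^ 'n) \<Rightarrow> bool" where
  "hyperbolic M \<longleftrightarrow>
     (\<exists>\<phi> A B. reparam \<phi> \<and> subspace A \<and> subspace B \<and> A \<inter> B = {0} \<and>
        {a + b | a b. a \<in> A \<and> b \<in> B} = UNIV \<and>
        (\<forall>a b t. a \<in> A \<longrightarrow> b \<in> B \<longrightarrow> a + b \<noteq> 0 \<longrightarrow>
           proj_eq (M (\<phi> t) *v (a + b)) (a + exp t *\<^sub>R b)))"

end

theory Submission
  imports Defs
begin

lemma mm_add_r: "((A::real^'n^'m) + B) ** C = A ** C + B ** C"
  by (simp add: matrix_matrix_mult_def vec_eq_iff algebra_simps sum.distrib)
lemma mm_diff_r: "((A::real^'n^'m) - B) ** C = A ** C - B ** C"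
  by (simp add: matrix_matrix_mult_def vec_eq_iff algebra_simps sum_subtractf)
lemma mm_diff_l: "(A::real^'n^'m) ** (B - C) = A ** B - A ** C"
  by (simp add: matrix_matrix_mult_def vec_eq_iff algebra_simps sum_subtractf)

lemma bilinear_mm: "bilinear (\<lambda>(A::real^'n^'m) (B::real^'p^'n). A ** B)"
  unfolding bilinear_def
  by (auto intro!: linearI simp: matrix_add_ldistrib mm_add_r matrix_scalar_ac scalar_matrix_assoc)

lemma bb_mm: "bounded_bilinear (\<lambda>(A::real^'n^'m) (B::real^'p^'n). A ** B)"
  using bilinear_mm bilinear_conv_bounded_bilinear by blast

lemma bilinear_mv: "bilinear (\<lambda>(A::real^'n^'m) (x::real^'n). A *v x)"
  unfolding bilinear_def
  by (auto intro!: linearI simp: algebra_simps scaleR_matrix_vector_assoc)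

lemma bb_mv: "bounded_bilinear (\<lambda>(A::real^'n^'m) (x::real^'n). A *v x)"
  using bilinear_mv bilinear_conv_bounded_bilinear by blast

lemma continuous_on_det:
  fixes f :: "'a::topological_space \<Rightarrow> real^'n^'n"
  assumes "continuous_on S f"
  shows "continuous_on S (\<lambda>t. det (f t))"
  unfolding det_def
  by (intro continuous_intros continuous_on_compose2[OF _ assms, of UNIV] ) (auto intro!: linear_continuous_on bounded_linear_vec_nth bounded_linear_compose[OF bounded_linear_vec_nth])

definition good :: "real^'n^'n \<Rightarrow> real^'n \<Rightarrow> bool" where
  "good X u \<longleftrightarrow> (\<forall>c1 c2. c1 *\<^sub>R u + c2 *\<^sub>R (X *v u) = 0 \<longrightarrow> c1 = 0 \<and> c2 = 0)"

lemma limit_zero_right: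
  fixes h :: "real \<Rightarrow> 'a::real_normed_vector"
  assumes "(h \<longlongrightarrow> L) (at_right 0)" "eventually (\<lambda>s. h s = 0) (at_right 0)"
  shows "L = 0"
proof -
  have "(h \<longlongrightarrow> 0) (at_right 0)"
    using assms(2) by (rule tendsto_eventually)
  then show ?thesis using assms(1) tendsto_unique trivial_limit_at_right_real by blast
qed

lemma stepA:
  fixes X :: "real^'n^'n"
  assumes H: "\<And>u. good X u \<Longrightarrow> \<exists>a b. X *v (X *v u) = a *\<^sub>R u + b *\<^sub>R (X *v u)"
  and gx: "good X x" and ex: "X *v (X *v x) = a *\<^sub>R x + b *\<^sub>R (X *v x)"
  shows "\<exists>l m. X *v (X *v y) - a *\<^sub>R y - b *\<^sub>R (X *v y) = l *\<^sub>R x + m *\<^sub>R (X *v x)"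
proof -
  define v where "v = X *v x"
  define z where "z = X *v (X *v y) - a *\<^sub>R y - b *\<^sub>R (X *v y)"
  have v0: "v \<noteq> 0" using gx unfolding good_def v_def
    by (metis add_0 one_neq_zero scaleR_one scaleR_zero_left)
  have vv: "v \<bullet> v > 0" using v0 by simp
  define w0 where "w0 = (v \<bullet> v) *\<^sub>R x - (x \<bullet> v) *\<^sub>R v"
  have "w0 \<noteq> 0"
  proof
    assume "w0 = 0"
    then have "(v \<bullet> v) *\<^sub>R x + (- (x \<bullet> v)) *\<^sub>R (X *v x) = 0" unfolding w0_def v_def by simp
    then have "v \<bullet> v = 0" using gx unfolding good_def by blast
    then show False using vv by simp
  qed
  define G where "G = (x \<bullet> x) * (v \<bullet> v) - (x \<bullet> v)^2"
  have "w0 \<bullet> w0 = (v \<bullet> v) * G"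
    unfolding w0_def G_def by (simp add: inner_diff_left inner_diff_right inner_commute power2_eq_square algebra_simps)
  moreover have "w0 \<bullet> w0 > 0" using \<open>w0 \<noteq> 0\<close> by simp
  ultimately have G0: "G > 0" using vv by (metis zero_less_mult_pos)
  define f where "f w = ((v \<bullet> v) * (x \<bullet> w) - (x \<bullet> v) * (v \<bullet> w)) / G" for w
  define g where "g w = ((x \<bullet> x) * (v \<bullet> w) - (x \<bullet> v) * (x \<bullet> w)) / G" for w
  have f_add: "f (w1 + w2) = f w1 + f w2" for w1 w2
    unfolding f_def using G0 by (simp add: inner_add_right field_simps)
  have f_sc: "f (c *\<^sub>R w) = c * f w" for c w
    unfolding f_def using G0 by (simp add: field_simps)
  have g_add: "g (w1 + w2) = g w1 + g w2" for w1 w2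
    unfolding g_def using G0 by (simp add: inner_add_right field_simps)
  have g_sc: "g (c *\<^sub>R w) = c * g w" for c w
    unfolding g_def using G0 by (simp add: field_simps)
  have f0: "f 0 = 0" unfolding f_def by simp
  have g0: "g 0 = 0" unfolding g_def by simp
  have fx: "f x = 1" unfolding f_def G_def using G0 unfolding G_def
    by (simp add: inner_commute power2_eq_square algebra_simps)
  have fv: "f v = 0" unfolding f_def by (simp add: inner_commute)
  have gx': "g x = 0" unfolding g_def by (simp add: inner_commute)
  have gv: "g v = 1" unfolding g_def using G0 unfolding G_def
    by (simp add: inner_commute power2_eq_square algebra_simps)
  define D where "D s = (1 + s * f y) * (1 + s * g (X *v y)) - s^2 * f (X *v y) * g y" for s
  define R where "R s = (f z * (1 + s * g (X *v y)) - s * f (X *v y) * g z) *\<^sub>R (x + s *\<^sub>R y)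
     + ((1 + s * f y) * g z - s * g y * f z) *\<^sub>R (v + s *\<^sub>R (X *v y))" for s
  have key: "D s *\<^sub>R z = R s" if s0: "s \<noteq> 0" and Ds: "D s \<noteq> 0" for s
  proof -
    define u where "u = x + s *\<^sub>R y"
    define w where "w = v + s *\<^sub>R (X *v y)"
    have Xu: "X *v u = w" unfolding u_def w_def v_def by (simp add: algebra_simps)
    have fu: "f u = 1 + s * f y" unfolding u_def by (simp add: f_add f_sc fx)
    have gu: "g u = s * g y" unfolding u_def by (simp add: g_add g_sc gx')
    have fw: "f w = s * f (X *v y)" unfolding w_def by (simp add: f_add f_sc fv)
    have gw: "g w = 1 + s * g (X *v y)" unfolding w_def by (simp add: g_add g_sc gv)
    have "good X u"
      unfolding good_def
    proof (intro allI impI)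
      fix c1 c2 assume c: "c1 *\<^sub>R u + c2 *\<^sub>R (X *v u) = 0"
      have e1: "c1 * (1 + s * f y) + c2 * (s * f (X *v y)) = 0"
        using arg_cong[OF c, of f] by (simp add: f_add f_sc Xu fu fw f0)
      have e2: "c1 * (s * g y) + c2 * (1 + s * g (X *v y)) = 0"
        using arg_cong[OF c, of g] by (simp add: g_add g_sc Xu gu gw g0)
      have "D s * c1 = 0"
      proof -
        have "D s * c1 = (1 + s * g (X *v y)) * (c1 * (1 + s * f y) + c2 * (s * f (X *v y)))
              - s * f (X *v y) * (c1 * (s * g y) + c2 * (1 + s * g (X *v y)))"
          unfolding D_def by (simp add: algebra_simps power2_eq_square)
        then show ?thesis using e1 e2 by simp
      qed
      moreover have "D s * c2 = 0"
      proof -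
        have "D s * c2 = (1 + s * f y) * (c1 * (s * g y) + c2 * (1 + s * g (X *v y)))
              - s * g y * (c1 * (1 + s * f y) + c2 * (s * f (X *v y)))"
          unfolding D_def by (simp add: algebra_simps power2_eq_square)
        then show ?thesis using e1 e2 by simp
      qed
      ultimately show "c1 = 0 \<and> c2 = 0" using Ds by simp
    qed
    then obtain \<alpha> \<beta> where ab: "X *v (X *v u) = \<alpha> *\<^sub>R u + \<beta> *\<^sub>R (X *v u)" using H by blast
    have "X *v (X *v u) = a *\<^sub>R u + b *\<^sub>R w + s *\<^sub>R z"
      unfolding u_def w_def z_def v_def using ex by (simp add: algebra_simps)
    then have "s *\<^sub>R z = (\<alpha> - a) *\<^sub>R u + (\<beta> - b) *\<^sub>R w" using ab Xu by (simp add: algebra_simps)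
    then have zz: "z = ((\<alpha> - a)/s) *\<^sub>R u + ((\<beta> - b)/s) *\<^sub>R w"
      using s0 by (metis (no_types, lifting) divide_inverse_commute scaleR_add_right scaleR_scaleR
          right_inverse scaleR_one mult.commute)
    define la where "la = (\<alpha> - a)/s"
    define mu where "mu = (\<beta> - b)/s"
    have zz': "z = la *\<^sub>R u + mu *\<^sub>R w" using zz la_def mu_def by simp
    have fz: "f z = la * (1 + s * f y) + mu * (s * f (X *v y))"
      using zz' by (simp add: f_add f_sc fu fw)
    have gz: "g z = la * (s * g y) + mu * (1 + s * g (X *v y))"
      using zz' by (simp add: g_add g_sc gu gw)
    have l1: "D s * la = f z * (1 + s * g (X *v y)) - s * f (X *v y) * g z"
      unfolding fz gz D_def by (simp add: algebra_simps power2_eq_square)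
    have l2: "D s * mu = (1 + s * f y) * g z - s * g y * f z"
      unfolding fz gz D_def by (simp add: algebra_simps power2_eq_square)
    have "D s *\<^sub>R z = (D s * la) *\<^sub>R u + (D s * mu) *\<^sub>R w"
      using zz' by (simp add: scaleR_add_right)
    also have "\<dots> = R s" unfolding l1 l2 R_def u_def w_def by simp
    finally show ?thesis .
  qed
  have Dlim: "(D \<longlongrightarrow> 1) (at_right 0)"
  proof -
    have "(D \<longlongrightarrow> D 0) (at_right 0)" unfolding D_def by (intro tendsto_intros)
    then show ?thesis by (simp add: D_def)
  qed
  have evD: "eventually (\<lambda>s. D s > 0) (at_right 0)"
    using order_tendstoD(1)[OF Dlim] by simp
  have ev0: "eventually (\<lambda>s. s > 0) (at_right (0::real))"
    by (simp add: eventually_at_right_less)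
  have ev: "eventually (\<lambda>s. D s *\<^sub>R z - R s = 0) (at_right 0)"
    using evD ev0 by eventually_elim (use key in auto)
  have hl: "((\<lambda>s. D s *\<^sub>R z - R s) \<longlongrightarrow> D 0 *\<^sub>R z - R 0) (at_right 0)"
    unfolding D_def R_def by (intro tendsto_intros)
  have "D 0 *\<^sub>R z - R 0 = 0" using limit_zero_right[OF hl ev] .
  then have "z = f z *\<^sub>R x + g z *\<^sub>R v" by (simp add: D_def R_def)
  then show ?thesis unfolding z_def v_def by blast
qed

lemma not_good_eigen:
  fixes X :: "real^'n^'n"
  assumes "\<not> good X u" "u \<noteq> 0"
  shows "\<exists>c. X *v u = c *\<^sub>R u"
proof -
  obtain c1 c2 where c: "c1 *\<^sub>R u + c2 *\<^sub>R (X *v u) = 0" "c1 \<noteq> 0 \<or> c2 \<noteq> 0"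
    using assms(1) unfolding good_def by blast
  have "c2 \<noteq> 0" using c assms(2) by auto
  then have "X *v u = (- c1 / c2) *\<^sub>R u" using c(1)
    by (metis (no_types, lifting) add.commute add_diff_cancel_right' diff_0 divide_inverse_commute
        minus_mult_commute mult_minus_right real_vector.scale_left_imp_eq scaleR_scaleR right_inverse
        scaleR_one scaleR_minus_left)
  then show ?thesis by blast
qed

lemma scalar_case:
  fixes X :: "real^'n^'n"
  assumes "\<And>u. \<not> good X u"
  shows "\<exists>l. \<forall>y. X *v y = l *\<^sub>R y"
proof -
  define e :: "real^'n" where "e = axis undefined 1"
  have e0: "e \<noteq> 0" unfolding e_def by (simp add: axis_eq_0_iff)
  obtain l where l: "X *v e = l *\<^sub>R e" using not_good_eigen[OF assms e0] by blast
  have "X *v y = l *\<^sub>R y" for y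
  proof (cases "\<exists>k. y = k *\<^sub>R e")
    case True
    then obtain k where "y = k *\<^sub>R e" by blast
    then show ?thesis using l by (simp add: algebra_simps)
  next
    case False
    then have y0: "y \<noteq> 0" by (metis scaleR_zero_left)
    obtain cy where cy: "X *v y = cy *\<^sub>R y" using not_good_eigen[OF assms y0] by blast
    have ey0: "e + y \<noteq> 0" using False by (metis add_eq_0_iff scaleR_minus1_left)
    obtain c where c: "X *v (e + y) = c *\<^sub>R (e + y)" using not_good_eigen[OF assms ey0] by blast
    have "(l - c) *\<^sub>R e + (cy - c) *\<^sub>R y = 0"
      using c l cy by (simp add: algebra_simps)
    have "cy - c = 0"
    proof (rule ccontr)
      assume "cy - c \<noteq> 0"
      then have "y = (- (l - c) / (cy - c)) *\<^sub>R e" using \<open>(l - c) *\<^sub>R e + (cy - c) *\<^sub>R y = 0\<close>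
        by (metis (no_types, lifting) add.commute add_diff_cancel_right' diff_0 divide_inverse_commute
          minus_mult_commute mult_minus_right real_vector.scale_left_imp_eq scaleR_scaleR right_inverse
          scaleR_one scaleR_minus_left)
      then show False using False by blast
    qed
    then have "(l - c) *\<^sub>R e = 0" using \<open>(l - c) *\<^sub>R e + (cy - c) *\<^sub>R y = 0\<close> by simp
    then have "l = c" using e0 by simp
    then show ?thesis using cy \<open>cy - c = 0\<close> by simp
  qed
  then show ?thesis by blast
qed

lemma solve_vec:
  fixes y :: "'a::real_vector"
  assumes "d *\<^sub>R y = w" "d \<noteq> 0"
  shows "y = (1/d) *\<^sub>R w"
  using assms by auto

lemma inter1:
  fixes x v y w :: "'a::real_vector"
  assumes ny: "\<not>(\<exists>c1 c2. y = c1 *\<^sub>R x + c2 *\<^sub>R v)"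
  and e1: "e1 = r1 *\<^sub>R y + r2 *\<^sub>R w" "e1 = p1 *\<^sub>R x + p2 *\<^sub>R v" "e1 \<noteq> 0"
  and e2: "e2 = r1' *\<^sub>R y + r2' *\<^sub>R w" "e2 = p1' *\<^sub>R x + p2' *\<^sub>R v"
  shows "\<exists>k. e2 = k *\<^sub>R e1"
proof -
  have "(r1 * r2' - r2 * r1') *\<^sub>R y = r2' *\<^sub>R e1 - r2 *\<^sub>R e2"
    using e1(1) e2(1) by (simp add: algebra_simps)
  also have "\<dots> = (r2' * p1 - r2 * p1') *\<^sub>R x + (r2' * p2 - r2 * p2') *\<^sub>R v"
    using e1(2) e2(2) by (simp add: algebra_simps)
  finally have eq: "(r1 * r2' - r2 * r1') *\<^sub>R y = (r2' * p1 - r2 * p1') *\<^sub>R x + (r2' * p2 - r2 * p2') *\<^sub>R v" .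
  have det: "r1 * r2' - r2 * r1' = 0"
  proof (rule ccontr)
    assume d: "r1 * r2' - r2 * r1' \<noteq> 0"
    from solve_vec[OF eq d] have "y = ((r2' * p1 - r2 * p1') / (r1 * r2' - r2 * r1')) *\<^sub>R x + ((r2' * p2 - r2 * p2') / (r1 * r2' - r2 * r1')) *\<^sub>R v"
      by (simp add: scaleR_add_right)
    then show False using ny by blast
  qed
  show ?thesis
  proof (cases "r1 = 0")
    case False
    have "e2 = (r1' / r1) *\<^sub>R e1"
    proof -
      have "r2' = r1' / r1 * r2" using det False by (simp add: field_simps)
      then show ?thesis using e1(1) e2(1) False by (simp add: algebra_simps)
    qed
    then show ?thesis by blast
  next
    case True
    then have "r2 \<noteq> 0" using e1 by auto
    then have "r1' = 0" using det True by simp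
    have "e2 = (r2' / r2) *\<^sub>R e1" using e1(1) e2(1) True \<open>r1' = 0\<close> \<open>r2 \<noteq> 0\<close> by simp
    then show ?thesis by blast
  qed
qed

lemma main_quad:
  fixes X :: "real^'n^'n"
  assumes H: "\<And>u. good X u \<Longrightarrow> \<exists>a b. X *v (X *v u) = a *\<^sub>R u + b *\<^sub>R (X *v u)"
  shows "\<exists>a b. \<forall>y. X *v (X *v y) = a *\<^sub>R y + b *\<^sub>R (X *v y)"
proof (cases "\<exists>u. good X u")
  case False
  then obtain l where l: "\<forall>y. X *v y = l *\<^sub>R y" using scalar_case by blast
  have "X *v (X *v y) = 0 *\<^sub>R y + l *\<^sub>R (X *v y)" for y using l by simp
  then show ?thesis by blast
next
  case True
  then obtain x where gx: "good X x" by blast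
  obtain a b where ex: "X *v (X *v x) = a *\<^sub>R x + b *\<^sub>R (X *v x)" using H[OF gx] by blast
  define N where "N y = X *v (X *v y) - a *\<^sub>R y - b *\<^sub>R (X *v y)" for y
  have Nlin: "N (c1 *\<^sub>R y1 + c2 *\<^sub>R y2) = c1 *\<^sub>R N y1 + c2 *\<^sub>R N y2" for c1 c2 y1 y2
    unfolding N_def by (simp add: algebra_simps)
  have Nx: "N x = 0" unfolding N_def using ex by simp
  have NXx: "N (X *v x) = 0" unfolding N_def using ex by (simp add: algebra_simps)
  have NV: "N (c1 *\<^sub>R x + c2 *\<^sub>R (X *v x)) = 0" for c1 c2 using Nlin Nx NXx by simp
  have SA: "\<exists>l m. N y = l *\<^sub>R x + m *\<^sub>R (X *v x)" for y
    using stepA[OF H gx ex] unfolding N_def by blast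
  have gxd: "c1 = 0 \<and> c2 = 0" if "c1 *\<^sub>R x + c2 *\<^sub>R (X *v x) = 0" for c1 c2
    using gx that unfolding good_def by blast
  have "N y = 0" for y
  proof (rule ccontr)
    assume Ny: "N y \<noteq> 0"
    have ynV: "\<not>(\<exists>c1 c2. y = c1 *\<^sub>R x + c2 *\<^sub>R (X *v x))" using NV Ny by blast
    have gy: "good X y"
    proof (rule ccontr)
      assume "\<not> good X y"
      moreover have "y \<noteq> 0" using Ny unfolding N_def by auto
      ultimately obtain c where c: "X *v y = c *\<^sub>R y" using not_good_eigen by blast
      have "N y = (c * c - a - b * c) *\<^sub>R y" unfolding N_def using c by (simp add: algebra_simps)
      moreover obtain l m where "N y = l *\<^sub>R x + m *\<^sub>R (X *v x)" using SA by blast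
      ultimately have "(c * c - a - b * c) *\<^sub>R y = l *\<^sub>R x + m *\<^sub>R (X *v x)" by simp
      moreover have "c * c - a - b * c \<noteq> 0" using Ny \<open>N y = (c * c - a - b * c) *\<^sub>R y\<close> by auto
      ultimately have "y = (1 / (c * c - a - b * c)) *\<^sub>R (l *\<^sub>R x + m *\<^sub>R (X *v x))"
        by (rule solve_vec)
      then have "y = (l / (c * c - a - b * c)) *\<^sub>R x + (m / (c * c - a - b * c)) *\<^sub>R (X *v x)"
        by (simp add: scaleR_add_right)
      then show False using ynV by blast
    qed
    obtain a' b' where ey: "X *v (X *v y) = a' *\<^sub>R y + b' *\<^sub>R (X *v y)" using H[OF gy] by blast
    have SAy: "\<exists>l m. X *v (X *v w) - a' *\<^sub>R w - b' *\<^sub>R (X *v w) = l *\<^sub>R y + m *\<^sub>R (X *v y)" for w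
      using stepA[OF H gy ey] by blast
    define al where "al = a - a'"
    define be where "be = b - b'"
    have Lw: "al *\<^sub>R w + be *\<^sub>R (X *v w) = (X *v (X *v w) - a' *\<^sub>R w - b' *\<^sub>R (X *v w)) - N w" for w
      unfolding al_def be_def N_def by (simp add: algebra_simps)
    have Ly: "al *\<^sub>R y + be *\<^sub>R (X *v y) = - N y" using Lw[of y] ey by simp
    obtain l1 m1 where L1: "al *\<^sub>R x + be *\<^sub>R (X *v x) = l1 *\<^sub>R y + m1 *\<^sub>R (X *v y)"
      using Lw[of x] Nx SAy[of x] by auto
    obtain l2 m2 where L2: "al *\<^sub>R (X *v x) + be *\<^sub>R (X *v (X *v x)) = l2 *\<^sub>R y + m2 *\<^sub>R (X *v y)"
      using Lw[of "X *v x"] NXx SAy[of "X *v x"] by auto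
    show False
    proof (cases "be = 0")
      case True
      then have al0: "al \<noteq> 0" using Ly Ny by auto
      have e1: "al *\<^sub>R x = l1 *\<^sub>R y + m1 *\<^sub>R (X *v y)" "al *\<^sub>R x = al *\<^sub>R x + 0 *\<^sub>R (X *v x)"
        "al *\<^sub>R x \<noteq> 0" using L1 True al0 gxd[of 1 0] by auto
      have e2: "al *\<^sub>R (X *v x) = l2 *\<^sub>R y + m2 *\<^sub>R (X *v y)" "al *\<^sub>R (X *v x) = 0 *\<^sub>R x + al *\<^sub>R (X *v x)"
        using L2 True by auto
      obtain k where "al *\<^sub>R (X *v x) = k *\<^sub>R (al *\<^sub>R x)" using inter1[OF ynV e1 e2] by blast
      then have "(- (k * al)) *\<^sub>R x + al *\<^sub>R (X *v x) = 0" by simp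
      then show False using gxd al0 by blast
    next
      case False
      define mu where "mu = - al / be"
      define e where "e = X *v x - mu *\<^sub>R x"
      have e_L: "e = (1/be) *\<^sub>R (al *\<^sub>R x + be *\<^sub>R (X *v x))"
        unfolding e_def mu_def using False by (simp add: algebra_simps)
      have e0: "e \<noteq> 0"
      proof
        assume "e = 0"
        then have "(- mu) *\<^sub>R x + 1 *\<^sub>R (X *v x) = 0" unfolding e_def by simp
        then show False using gxd[of "- mu" 1] by simp
      qed
      have eU: "e = (l1/be) *\<^sub>R y + (m1/be) *\<^sub>R (X *v y)" using e_L L1 by (simp add: scaleR_add_right)
      have eV: "e = (- mu) *\<^sub>R x + 1 *\<^sub>R (X *v x)" unfolding e_def by simp
      have Xe: "X *v e = (1/be) *\<^sub>R (al *\<^sub>R (X *v x) + be *\<^sub>R (X *v (X *v x)))"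
        unfolding e_def mu_def using False by (simp add: algebra_simps)
      have XeU: "X *v e = (l2/be) *\<^sub>R y + (m2/be) *\<^sub>R (X *v y)" using Xe L2 by (simp add: scaleR_add_right)
      have XeV: "X *v e = a *\<^sub>R x + (b - mu) *\<^sub>R (X *v x)" unfolding e_def using ex by (simp add: algebra_simps)
      obtain ka where ka: "X *v e = ka *\<^sub>R e" using inter1[OF ynV eU eV e0 XeU XeV] by blast
      obtain l3 m3 where NyV: "N y = l3 *\<^sub>R x + m3 *\<^sub>R (X *v x)" using SA by blast
      have yU: "X *v y - mu *\<^sub>R y = (- mu) *\<^sub>R y + 1 *\<^sub>R (X *v y)" by simp
      have yV: "X *v y - mu *\<^sub>R y = (- l3/be) *\<^sub>R x + (- m3/be) *\<^sub>R (X *v x)"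
      proof -
        have "X *v y - mu *\<^sub>R y = (1/be) *\<^sub>R (al *\<^sub>R y + be *\<^sub>R (X *v y))"
          unfolding mu_def using False by (simp add: algebra_simps)
        also have "\<dots> = (1/be) *\<^sub>R (- N y)" using Ly by simp
        finally show ?thesis using NyV by (simp add: algebra_simps)
      qed
      obtain nu where nu: "X *v y - mu *\<^sub>R y = nu *\<^sub>R e" using inter1[OF ynV eU eV e0 yU yV] by blast
      have "(a + ka * mu) *\<^sub>R x + (b - mu - ka) *\<^sub>R (X *v x) = 0"
        using ka XeV unfolding e_def by (simp add: algebra_simps)
      from gxd[OF this] have ab: "a = - ka * mu" "b = mu + ka" by auto
      have Xy: "X *v y = mu *\<^sub>R y + nu *\<^sub>R e" using nu by (simp add: algebra_simps)
      have XXy: "X *v (X *v y) = (mu*mu) *\<^sub>R y + (mu*nu + nu*ka) *\<^sub>R e"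
      proof -
        have "X *v (X *v y) = X *v (mu *\<^sub>R y + nu *\<^sub>R e)" by (simp only: Xy)
        also have "\<dots> = mu *\<^sub>R (X *v y) + nu *\<^sub>R (X *v e)"
          by (simp only: matrix_vector_right_distrib matrix_vector_mult_scaleR)
        also have "\<dots> = mu *\<^sub>R (mu *\<^sub>R y + nu *\<^sub>R e) + nu *\<^sub>R (ka *\<^sub>R e)"
          by (simp only: Xy ka)
        also have "\<dots> = (mu*mu) *\<^sub>R y + (mu*nu + nu*ka) *\<^sub>R e"
          by (simp add: algebra_simps)
        finally show ?thesis .
      qed
      have "N y = 0"
        unfolding N_def XXy unfolding Xy ab by (simp add: algebra_simps)
      then show False using Ny by simp
    qed
  qed
  then have "X *v (X *v y) = a *\<^sub>R y + b *\<^sub>R (X *v y)" for y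
    unfolding N_def by (simp add: algebra_simps)
  then show ?thesis by blast
qed

lemma det_scaleR: "det (k *\<^sub>R (A::real^'n^'n)) = k ^ CARD('n) * det A"
proof -
  have e: "k *\<^sub>R A = (k *\<^sub>R mat 1) ** A" by (simp add: scalar_matrix_assoc[symmetric])
  have "det (k *\<^sub>R mat 1 :: real^'n^'n) = k ^ CARD('n)"
    by (subst det_diagonal) (auto simp: mat_def)
  then show ?thesis by (metis e det_mul)
qed

lemma inv_cancel_left:
  fixes A :: "real^'n^'n"
  assumes "invertible A" "A ** B = A ** C" shows "B = C"
proof -
  obtain A' where "A' ** A = mat 1" using assms(1) invertible_left_inverse by blast
  then show ?thesis by (metis assms(2) matrix_mul_assoc matrix_mul_lid)
qed

lemma normalize_flow:
  fixes M :: "real \<Rightarrow> real^'n^'n"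
  assumes cont: "continuous_on UNIV M" and hom: "is_proj_hom M"
  obtains P :: "real \<Rightarrow> real^'n^'n" and c :: "real \<Rightarrow> real" where
   "continuous_on UNIV P" "\<And>s t. P (s+t) = P s ** P t" "P 0 = mat 1" "\<And>t. c t \<noteq> 0"
   "\<And>t. M t = c t *\<^sub>R P t"
proof -
  define n where "n = CARD('n)"
  have n0: "n > 0" unfolding n_def by simp
  have invM: "invertible (M t)" for t using hom unfolding is_proj_hom_def by blast
  have detM: "det (M t) \<noteq> 0" for t using invM invertible_det_nz by blast
  define d where "d t = \<bar>det (M t)\<bar> powr (1 / real n)" for t
  have d0: "d t > 0" for t unfolding d_def using detM by simp
  have dn: "d t ^ n = \<bar>det (M t)\<bar>" for t
  proof -
    have "d t ^ n = d t powr (real n)" using d0 by (simp add: powr_realpow)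
    also have "\<dots> = \<bar>det (M t)\<bar>" unfolding d_def using n0 detM by (simp add: powr_powr)
    finally show ?thesis .
  qed
  have dcont: "continuous_on UNIV d"
    unfolding d_def using detM
    by (intro continuous_intros continuous_on_det[OF cont]) auto
  define N where "N t = (1 / d t) *\<^sub>R M t" for t
  have Ncont: "continuous_on UNIV N"
    unfolding N_def using d0 by (intro continuous_intros dcont cont) (auto simp: less_imp_neq[symmetric])
  have detN: "\<bar>det (N t)\<bar> = 1" for t
    unfolding N_def det_scaleR n_def[symmetric] using dn[of t] d0[of t] detM[of t]
    by (simp add: abs_mult power_one_over)
  have NM: "M t = d t *\<^sub>R N t" for t unfolding N_def using d0[of t] by simp
  have NN0: "N s ** N t \<noteq> 0" for s t
  proof
    assume "N s ** N t = 0"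
    then have "det (N s ** N t) = 0" by (metis det_0 mat_0)
    then show False using detN[of s] detN[of t] by (auto simp: det_mul)
  qed
  have ex_k: "\<exists>k. \<bar>k\<bar> = 1 \<and> N (s+t) = k *\<^sub>R (N s ** N t)" for s t
  proof -
    obtain c where c: "c \<noteq> 0" "M (s+t) = c *\<^sub>R (M s ** M t)" using hom unfolding is_proj_hom_def by blast
    define k where "k = c * d s * d t / d (s+t)"
    have "N (s+t) = k *\<^sub>R (N s ** N t)"
      unfolding N_def k_def using c(2) d0[of s] d0[of t] d0[of "s+t"]
      by (simp add: matrix_scalar_ac scalar_matrix_assoc[symmetric])
    moreover have "\<bar>k\<bar> = 1"
    proof -
      have "\<bar>det (N (s+t))\<bar> = \<bar>k\<bar>^n * (\<bar>det (N s)\<bar> * \<bar>det (N t)\<bar>)"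
        using \<open>N (s+t) = k *\<^sub>R (N s ** N t)\<close> by (simp add: det_scaleR det_mul abs_mult n_def power_abs)
      then have "\<bar>k\<bar>^n = 1" using detN by simp
      then show ?thesis using power_eq_1_iff[of "\<bar>k\<bar>" n] n0 by simp
    qed
    ultimately show ?thesis by blast
  qed
  define k where "k s t = (N (s+t) \<bullet> (N s ** N t)) / ((N s ** N t) \<bullet> (N s ** N t))" for s t
  have kprop: "\<bar>k s t\<bar> = 1 \<and> N (s+t) = k s t *\<^sub>R (N s ** N t)" for s t
  proof -
    obtain k0 where k0: "\<bar>k0\<bar> = 1" "N (s+t) = k0 *\<^sub>R (N s ** N t)" using ex_k by blast
    have "k s t = k0" unfolding k_def k0(2) using NN0[of s t] by simp
    then show ?thesis using k0 by simp
  qed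
  have kconst: "k s t = k s 0" for s t
  proof -
    have c1: "continuous_on UNIV (\<lambda>t. N (s + t))"
      by (rule continuous_on_compose2[OF Ncont]) (auto intro!: continuous_intros)
    have c2: "continuous_on UNIV (\<lambda>t. N s ** N t)"
      using bounded_bilinear.continuous_on[OF bb_mm continuous_on_const[of UNIV "N s"] Ncont] by simp
    have "continuous_on UNIV (\<lambda>t. k s t)"
      unfolding k_def by (intro continuous_on_divide continuous_on_inner c1 c2) (use NN0 in auto)
    moreover have "finite ((\<lambda>t. k s t) ` UNIV)"
    proof (rule finite_subset)
      show "(\<lambda>t. k s t) ` UNIV \<subseteq> {-1, 1}"
      proof clarify
        fix t assume "k s t \<notin> {}" "k s t \<noteq> -1"
        then show "k s t = 1" using kprop[of s t] by (auto simp: abs_if split: if_splits)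
      qed
    qed auto
    ultimately have "(\<lambda>t. k s t) constant_on UNIV"
      by (intro continuous_finite_range_constant) auto
    then show ?thesis unfolding constant_on_def by auto
  qed
  define \<sigma> where "\<sigma> = k 0 0"
  have sig2: "\<sigma> * \<sigma> = 1" using kprop[of 0 0] unfolding \<sigma>_def by (auto simp: abs_if split: if_splits)
  have invN: "invertible (N t)" for t using detN[of t] invertible_det_nz by fastforce
  have N0: "N 0 = \<sigma> *\<^sub>R mat 1"
  proof -
    have "N 0 ** mat 1 = N 0 ** (\<sigma> *\<^sub>R N 0)"
      using kprop[of 0 0] unfolding \<sigma>_def by (simp add: matrix_scalar_ac scalar_matrix_assoc)
    then have "mat 1 = \<sigma> *\<^sub>R N 0" using inv_cancel_left[OF invN] by blast
    then have "\<sigma> *\<^sub>R mat 1 = (\<sigma> * \<sigma>) *\<^sub>R N 0" by simp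
    then show ?thesis using sig2 by simp
  qed
  have kall: "k s t = \<sigma>" for s t
  proof -
    have "N s = k s 0 *\<^sub>R (N s ** N 0)" using kprop[of s 0] by simp
    also have "\<dots> = (k s 0 * \<sigma>) *\<^sub>R N s" unfolding N0 by (simp add: matrix_scalar_ac scalar_matrix_assoc)
    finally have "(1 - k s 0 * \<sigma>) *\<^sub>R N s = 0" by (simp add: algebra_simps)
    moreover have "N s \<noteq> 0" using detN[of s] by (metis abs_0 det_0 mat_0 zero_neq_one)
    ultimately have "k s 0 * \<sigma> = 1" by simp
    then have "k s 0 = \<sigma>" using sig2 by (metis mult.commute mult.left_neutral mult.assoc)
    then show ?thesis using kconst[of s t] by simp
  qed
  define P where "P t = \<sigma> *\<^sub>R N t" for t
  define c where "c t = d t * \<sigma>" for t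
  show ?thesis
  proof
    show "continuous_on UNIV P" unfolding P_def by (intro continuous_intros Ncont)
    show "P (s + t) = P s ** P t" for s t
      unfolding P_def using kprop[of s t] kall[of s t] sig2
      by (simp add: matrix_scalar_ac scalar_matrix_assoc[symmetric])
    show "P 0 = mat 1" unfolding P_def N0 using sig2 by simp
    show "c t \<noteq> 0" for t unfolding c_def using d0[of t] sig2 by auto
    show "M t = c t *\<^sub>R P t" for t unfolding c_def P_def NM using sig2 by (simp add: mult.assoc)
  qed
qed

lemma det_near_id:
  obtains \<delta> where "\<delta> > 0" "\<And>A::real^'n^'n. dist A (mat 1) < \<delta> \<Longrightarrow> det A \<noteq> 0"
proof -
  have "continuous_on UNIV (\<lambda>A::real^'n^'n. det A)"
    by (rule continuous_on_det[OF continuous_on_id])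
  then obtain \<delta> where d: "\<delta> > 0" "\<And>A::real^'n^'n. dist A (mat 1) < \<delta> \<Longrightarrow> dist (det A) (det (mat 1 :: real^'n^'n)) < 1"
    unfolding continuous_on_iff by (metis UNIV_I zero_less_one)
  show ?thesis
  proof (rule that[OF d(1)])
    fix A :: "real^'n^'n" assume "dist A (mat 1) < \<delta>"
    then have "dist (det A) 1 < 1" using d(2) by simp
    then show "det A \<noteq> 0" by auto
  qed
qed

lemma flow_deriv0:
  fixes P :: "real \<Rightarrow> real^'n^'n"
  assumes cont: "continuous_on UNIV P" and grp: "\<And>s t. P (s+t) = P s ** P t" and P0: "P 0 = mat 1"
  obtains X where "(P has_vector_derivative X) (at 0)"
proof -
  obtain \<delta> where d: "\<delta> > 0" "\<And>A::real^'n^'n. dist A (mat 1) < \<delta> \<Longrightarrow> det A \<noteq> 0"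
    using det_near_id by blast
  obtain \<eta> where e: "\<eta> > 0" "\<And>s. dist s 0 < \<eta> \<Longrightarrow> dist (P s) (P 0) < \<delta>/2"
    using cont unfolding continuous_on_iff using d(1) by (metis UNIV_I half_gt_zero)
  define h where "h = min 1 (\<eta>/2)"
  have h0: "h > 0" "h \<le> 1" "h < \<eta>" unfolding h_def using e(1) by auto
  define K where "K = integral {0..h} P"
  have Pint: "P integrable_on {a..b}" for a b
    by (rule integrable_continuous_real) (rule continuous_on_subset[OF cont], simp)
  have "integral {0..h} (\<lambda>s. P s - mat 1) = K - h *\<^sub>R mat 1"
    unfolding K_def using h0 by (simp add: integral_diff[OF Pint integrable_const_ivl])
  moreover have "norm (integral {0..h} (\<lambda>s. P s - mat 1)) \<le> (\<delta>/2) * (h - 0)"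
  proof (rule integral_bound)
    show "continuous_on {0..h} (\<lambda>s. P s - mat 1)"
      by (intro continuous_intros continuous_on_subset[OF cont]) auto
    show "norm (P t - mat 1) \<le> \<delta> / 2" if "t \<in> {0..h}" for t
      using e(2)[of t] that h0 P0 by (auto simp: dist_norm)
  qed (use h0 in auto)
  ultimately have "norm (K - h *\<^sub>R mat 1) \<le> \<delta>/2 * h" by simp
  then have "norm ((1/h) *\<^sub>R K - mat 1) \<le> \<delta>/2"
  proof -
    have "(1/h) *\<^sub>R K - mat 1 = (1/h) *\<^sub>R (K - h *\<^sub>R mat 1)" using h0 by (simp add: scaleR_diff_right)
    then have "norm ((1/h) *\<^sub>R K - mat 1) = (1/h) * norm (K - h *\<^sub>R mat 1)" using h0 by simp
    also have "\<dots> \<le> (1/h) * (\<delta>/2 * h)" using \<open>norm (K - h *\<^sub>R mat 1) \<le> \<delta>/2 * h\<close> h0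
      by (intro mult_left_mono) auto
    also have "\<dots> = \<delta>/2" using h0 by simp
    finally show ?thesis .
  qed
  then have "det ((1/h) *\<^sub>R K) \<noteq> 0" using d by (intro d(2)) (simp add: dist_norm)
  then have "det K \<noteq> 0" by (simp add: det_scaleR)
  then have "invertible K" using invertible_det_nz by blast
  then obtain K' where KK': "K ** K' = mat 1" unfolding invertible_def by blast
  define F where "F u = integral {-2..u} P" for u
  have c23: "continuous_on {-2..3} P" using continuous_on_subset[OF cont] by blast
  have Fd: "(F has_vector_derivative P u) (at u)" if "u \<in> {-2<..<3}" for u
  proof -
    have u: "u \<in> {-2..3}" using that by auto
    have "(F has_vector_derivative P u) (at u within {-2..3})"
      unfolding F_def by (rule integral_has_vector_derivative[OF c23 u])
    moreover have "{-2<..<3} \<subseteq> {-2..(3::real)}" by auto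
    ultimately have "(F has_vector_derivative P u) (at u within {-2<..<3})"
      by (rule has_vector_derivative_within_subset)
    then show ?thesis using has_vector_derivative_within_open[of u "{-2<..<3}" F "P u"] that by simp
  qed
  have Fs: "((\<lambda>s. F (e + s)) has_vector_derivative P (e + s)) (at s)" if "e + s \<in> {-2<..<3}" for e s
  proof -
    have "((\<lambda>s. e + s) has_vector_derivative 1) (at s)"
      using has_vector_derivative_add[OF has_vector_derivative_const has_vector_derivative_id] by simp
    from vector_diff_chain_at[OF this Fd[OF that]] show ?thesis by (simp add: o_def)
  qed
  have PK: "P e ** K = F (e + h) - F e" if "e \<in> {-1<..<1}" for e
  proof -
    have "integral {0..h} ((\<lambda>B. P e ** B) \<circ> P) = P e ** integral {0..h} P"
      by (rule integral_linear[OF Pint bounded_bilinear.bounded_linear_right[OF bb_mm]])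
    then have "P e ** K = integral {0..h} (\<lambda>s. P e ** P s)"
      unfolding K_def by (simp add: o_def)
    also have "\<dots> = integral {0..h} (\<lambda>s. P (e + s))" by (simp add: grp)
    also have "\<dots> = F (e + h) - F (e + 0)"
    proof (rule integral_unique, rule fundamental_theorem_of_calculus)
      show "0 \<le> h" using h0 by simp
      fix s assume "s \<in> {0..h}"
      then have "e + s \<in> {-2<..<3}" using that h0 by auto
      then show "((\<lambda>s. F (e + s)) has_vector_derivative P (e + s)) (at s within {0..h})"
        using Fs has_vector_derivative_at_within by blast
    qed
    finally show ?thesis by simp
  qed
  define G where "G e = (F (e + h) - F e) ** K'" for e
  have PG: "P e = G e" if "e \<in> {-1<..<1}" for e
  proof -
    have "P e = (P e ** K) ** K'" using KK' by (simp add: matrix_mul_assoc[symmetric])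
    then show ?thesis unfolding G_def using PK[OF that] by simp
  qed
  have "(G has_vector_derivative (P (0 + h) - P 0) ** K') (at 0)"
  proof -
    have d1: "((\<lambda>e. F (e + h)) has_vector_derivative P (0 + h)) (at 0)"
      using Fs[of h 0] h0 by (simp add: add.commute)
    have d2: "(F has_vector_derivative P 0) (at 0)" using Fd by simp
    have "((\<lambda>e. F (e + h) - F e) has_vector_derivative P (0 + h) - P 0) (at 0)"
      by (rule has_vector_derivative_diff[OF d1 d2])
    from bounded_linear.has_vector_derivative[OF bounded_bilinear.bounded_linear_left[OF bb_mm] this]
    show ?thesis unfolding G_def .
  qed
  then have "(P has_vector_derivative (P (0 + h) - P 0) ** K') (at 0)"
    by (rule has_vector_derivative_transform_within_open[of _ _ _ "{-1<..<1}"]) (use PG in auto)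
  then show ?thesis using that by blast
qed

lemma flow_deriv:
  fixes P :: "real \<Rightarrow> real^'n^'n"
  assumes cont: "continuous_on UNIV P" and grp: "\<And>s t. P (s+t) = P s ** P t" and P0: "P 0 = mat 1"
  obtains X where "\<And>t. (P has_vector_derivative (X ** P t)) (at t)" "\<And>t. X ** P t = P t ** X"
proof -
  obtain X where X: "(P has_vector_derivative X) (at 0)" using flow_deriv0[OF assms] by blast
  have sh: "((\<lambda>u. u - t) has_vector_derivative 1) (at t)" for t :: real
    using has_vector_derivative_diff[OF has_vector_derivative_id has_vector_derivative_const] by simp
  have R: "(P has_vector_derivative (P t ** X)) (at t)" for t
  proof -
    have "((\<lambda>e. P t ** P e) has_vector_derivative P t ** X) (at 0)"
      using bounded_linear.has_vector_derivative[OF bounded_bilinear.bounded_linear_right[OF bb_mm] X] .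
    from vector_diff_chain_at[OF sh[of t], simplified, OF this]
    have "((\<lambda>e. P t ** P e) \<circ> (\<lambda>u. u - t) has_vector_derivative P t ** X) (at t)" by simp
    moreover have "((\<lambda>e. P t ** P e) \<circ> (\<lambda>u. u - t)) = P"
      by (rule ext) (simp add: grp[symmetric])
    ultimately show ?thesis by simp
  qed
  have L: "(P has_vector_derivative (X ** P t)) (at t)" for t
  proof -
    have "((\<lambda>e. P e ** P t) has_vector_derivative X ** P t) (at 0)"
      using bounded_linear.has_vector_derivative[OF bounded_bilinear.bounded_linear_left[OF bb_mm] X] .
    from vector_diff_chain_at[OF sh[of t], simplified, OF this]
    have "((\<lambda>e. P e ** P t) \<circ> (\<lambda>u. u - t) has_vector_derivative X ** P t) (at t)" by simp
    moreover have "((\<lambda>e. P e ** P t) \<circ> (\<lambda>u. u - t)) = P"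
      by (rule ext) (simp add: grp[symmetric])
    ultimately show ?thesis by simp
  qed
  show ?thesis
  proof
    show "(P has_vector_derivative (X ** P t)) (at t)" for t using L .
    show "X ** P t = P t ** X" for t using vector_derivative_unique_at[OF L R] .
  qed
qed

lemma deriv_in_subspace:
  fixes f :: "real \<Rightarrow> real^'n"
  assumes S: "subspace S" and d: "(f has_vector_derivative v) (at t)" and fS: "\<And>s. f s \<in> S"
  shows "v \<in> S"
proof -
  obtain p r where p: "p \<in> span S" and r: "\<And>w. w \<in> span S \<Longrightarrow> orthogonal r w" and vpr: "v = p + r"
    using orthogonal_subspace_decomp_exists by blast
  have "((\<lambda>s. f s \<bullet> r) has_vector_derivative (v \<bullet> r)) (at t)"
    using bounded_linear.has_vector_derivative[OF bounded_linear_inner_left d] .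
  then have D1: "((\<lambda>s. f s \<bullet> r) has_real_derivative (v \<bullet> r)) (at t)"
    by (simp add: has_real_derivative_iff_has_vector_derivative)
  have "f s \<bullet> r = 0" for s using r[of "f s"] fS[of s] span_base[of "f s" S] by (simp add: orthogonal_def inner_commute)
  then have D2: "((\<lambda>s. f s \<bullet> r) has_real_derivative 0) (at t)" by simp
  have "v \<bullet> r = 0" using DERIV_unique[OF D1 D2] .
  moreover have "p \<bullet> r = 0" using r[OF p] by (simp add: orthogonal_def inner_commute)
  ultimately have "r \<bullet> r = 0" unfolding vpr by (simp add: inner_add_left)
  then have "r = 0" by simp
  then show ?thesis using p vpr S by (metis add.right_neutral span_eq_iff)
qed

lemma two_dim_comb:
  fixes u v w :: "real^'n"
  assumes S: "subspace S" "dim S = 2" and in_S: "u \<in> S" "v \<in> S" "w \<in> S"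
  and ind: "\<And>c1 c2. c1 *\<^sub>R u + c2 *\<^sub>R v = 0 \<Longrightarrow> c1 = 0 \<and> c2 = 0"
  shows "\<exists>a b. w = a *\<^sub>R u + b *\<^sub>R v"
proof -
  have v0: "v \<noteq> 0" using ind[of 0 1] by auto
  have uv: "u \<notin> span {v}"
  proof
    assume "u \<in> span {v}"
    then obtain k where "u = k *\<^sub>R v" by (auto simp: span_singleton)
    then have "1 *\<^sub>R u + (-k) *\<^sub>R v = 0" by simp
    from ind[OF this] show False by simp
  qed
  have ne: "u \<noteq> v" using uv by (auto simp: span_base)
  have "w \<in> span {u, v}"
  proof (rule ccontr)
    assume wn: "w \<notin> span {u, v}"
    have i2: "independent {u, v}" using uv v0 by (simp add: independent_insert)
    have i3: "independent {w, u, v}" using wn i2 by (simp add: independent_insertI)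
    have "w \<noteq> u" "w \<noteq> v" using wn by (auto simp: span_base)
    then have "card {w, u, v} = 3" using ne by simp
    moreover have "card {w, u, v} \<le> dim S" using independent_card_le_dim[OF _ i3, of S] in_S by simp
    ultimately show False using S(2) by simp
  qed
  then obtain k where "w - k *\<^sub>R u \<in> span {v}" by (auto simp: span_insert)
  then obtain m where "w - k *\<^sub>R u = m *\<^sub>R v" by (auto simp: span_singleton)
  then have "w = k *\<^sub>R u + m *\<^sub>R v" by (simp add: algebra_simps)
  then show ?thesis by blast
qed

lemma flow_H:
  fixes M P :: "real \<Rightarrow> real^'n^'n" and X :: "real^'n^'n"
  assumes lf: "linear_flow M" and Mc: "\<And>t. M t = c t *\<^sub>R P t" and c0: "\<And>t. c t \<noteq> 0"
  and P0: "P 0 = mat 1" and grp: "\<And>s t. P (s+t) = P s ** P t"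
  and dP: "\<And>t. (P has_vector_derivative (X ** P t)) (at t)" and comm: "\<And>t. X ** P t = P t ** X"
  and gu: "good X u"
  shows "\<exists>a b. X *v (X *v u) = a *\<^sub>R u + b *\<^sub>R (X *v u)"
proof -
  have u0: "u \<noteq> 0"
  proof
    assume "u = 0"
    then have "1 *\<^sub>R u + 0 *\<^sub>R (X *v u) = 0" by simp
    then show False using gu unfolding good_def by (metis one_neq_zero)
  qed
  obtain S where S: "subspace S" "dim S = 2" "\<And>t. M t *v u \<in> S"
    using lf u0 unfolding linear_flow_def orbit_in_proper_line_def by blast
  have PS: "P t *v u \<in> S" for t
  proof -
    have "P t *v u = (1 / c t) *\<^sub>R (M t *v u)" using c0[of t] unfolding Mc
      by (simp add: scaleR_matrix_vector_assoc[symmetric])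
    then show ?thesis using S(1) S(3)[of t] by (simp add: subspace_scale)
  qed
  have dPv: "((\<lambda>t. P t *v w) has_vector_derivative (X ** P t) *v w) (at t)" for w t
    using bounded_linear.has_vector_derivative[OF bounded_bilinear.bounded_linear_left[OF bb_mv] dP[of t]] .
  have uS: "u \<in> S" using PS[of 0] P0 by simp
  have XuS: "X *v u \<in> S"
    using deriv_in_subspace[OF S(1) dPv[of u 0] PS] P0 by simp
  have PXu: "P t *v (X *v u) \<in> S" for t
  proof -
    have "(X ** P 0) *v (P t *v u) \<in> S"
    proof (rule deriv_in_subspace[OF S(1) dPv[of "P t *v u" 0]])
      fix s show "P s *v (P t *v u) \<in> S" using PS[of "s + t"] by (simp add: grp matrix_vector_mul_assoc)
    qed
    moreover have "(X ** P 0) *v (P t *v u) = P t *v (X *v u)"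
      using comm[of t] P0 by (simp add: matrix_vector_mul_assoc)
    ultimately show ?thesis by simp
  qed
  have XXuS: "X *v (X *v u) \<in> S"
    using deriv_in_subspace[OF S(1) dPv[of "X *v u" 0] PXu] P0 by simp
  show ?thesis
    by (rule two_dim_comb[OF S(1,2) uS XuS XXuS]) (use gu in \<open>auto simp: good_def\<close>)
qed

lemmas msimps = matrix_add_ldistrib mm_add_r mm_diff_l mm_diff_r matrix_scalar_ac
  scalar_matrix_assoc[symmetric] matrix_mul_lid matrix_mul_rid

lemma ode_unique:
  fixes P Q :: "real \<Rightarrow> real^'n^'n" and X :: "real^'n^'n"
  assumes dP: "\<And>t. (P has_vector_derivative X ** P t) (at t)" and P0: "P 0 = mat 1"
  and dQ: "\<And>t. (Q has_vector_derivative X ** Q t) (at t)" and Q0: "Q 0 = mat 1"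
  and QX: "\<And>t. Q t ** X = X ** Q t" and Qinv: "\<And>t. Q (-t) ** Q t = mat 1"
  shows "P t = Q t"
proof -
  define R where "R s = Q (-s) ** P s" for s
  have dQm: "((\<lambda>s. Q (-s)) has_vector_derivative - (X ** Q (-s))) (at s)" for s
  proof -
    have m: "((\<lambda>s::real. -s) has_vector_derivative -1) (at s)"
      using has_vector_derivative_minus[OF has_vector_derivative_id] by simp
    from vector_diff_chain_at[OF m dQ[of "-s"]] show ?thesis by (simp add: o_def)
  qed
  have dR: "(R has_vector_derivative 0) (at s)" for s
  proof -
    have "(R has_vector_derivative (Q (-s) ** (X ** P s) + (- (X ** Q (-s))) ** P s)) (at s)"
      unfolding R_def by (rule bounded_bilinear.has_vector_derivative[OF bb_mm dQm dP])
    moreover have "Q (-s) ** (X ** P s) + (- (X ** Q (-s))) ** P s = 0"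
    proof -
      have "(- (X ** Q (-s))) ** P s = - ((X ** Q (-s)) ** P s)"
        using mm_diff_r[of 0 "X ** Q (-s)" "P s"] by simp
      then show ?thesis using QX[of "-s"] by (simp add: matrix_mul_assoc)
    qed
    ultimately show ?thesis by simp
  qed
  obtain C where C: "\<forall>s\<in>UNIV. R s = C"
    using has_derivative_zero_constant[of UNIV R] dR
    unfolding has_vector_derivative_def by auto
  have "R t = mat 1" using C P0 Q0 unfolding R_def by (metis UNIV_I matrix_mul_lid minus_zero)
  then have "Q (-t) ** P t = mat 1" unfolding R_def .
  moreover have "Q t ** Q (-t) = mat 1" using Qinv[of "-t"] by simp
  ultimately show ?thesis by (metis matrix_mul_assoc matrix_mul_lid matrix_mul_rid)
qed

lemmas vsimps = matrix_vector_mul_assoc[symmetric] matrix_vector_mult_add_rdistrib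
  matrix_vector_mult_diff_rdistrib scaleR_matrix_vector_assoc[symmetric] matrix_vector_mul_lid
  matrix_vector_right_distrib matrix_vector_mult_diff_distrib matrix_vector_mult_scaleR

lemma vec_mult_numeral[simp]: "(v::real^'n) * numeral k = (numeral k :: real) *\<^sub>R v"
  by (simp add: vec_eq_iff)

lemma mat_eqI: "(\<And>x. (A::real^'n^'n) *v x = B *v x) \<Longrightarrow> A = B"
  by (simp add: matrix_eq)

lemma dexp: "((\<lambda>t. exp (r * t)) has_field_derivative (r * exp (r * t))) (at t)"
  by (auto intro!: derivative_eq_intros)

lemma reparam_lin: "k \<noteq> 0 \<Longrightarrow> reparam (\<lambda>t. k * t)"
  unfolding reparam_def
proof (intro conjI allI)
  assume k: "k \<noteq> 0"
  show "bij (\<lambda>t. k * t)"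
    by (rule bij_betw_byWitness[where f'="\<lambda>t. t / k"]) (use k in auto)
  show "continuous_on UNIV (\<lambda>t. k * t)" by (intro continuous_intros)
  show "k * (s + t) = k * s + k * t" for s t by (simp add: algebra_simps)
qed

lemma case_zero:
  fixes M P :: "real \<Rightarrow> real^'n^'n" and X :: "real^'n^'n"
  assumes dP: "\<And>t. (P has_vector_derivative X ** P t) (at t)" and P0: "P 0 = mat 1"
  and XX: "\<And>y. X *v (X *v y) = a *\<^sub>R y + b *\<^sub>R (X *v y)"
  and disc: "b^2 + 4 * a = 0"
  and Mc: "\<And>t. M t = c t *\<^sub>R P t" and c0: "\<And>t. c t \<noteq> 0"
  shows "parabolic M"
proof -
  define r where "r = b / 2"
  have ar: "a = - r * r" "b = 2 * r" using disc unfolding r_def by (auto simp: power2_eq_square field_simps)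
  define N where "N = X - r *\<^sub>R mat 1"
  have XN: "X *v y = r *\<^sub>R y + N *v y" for y unfolding N_def by (simp add: vsimps)
  have NN: "N *v (N *v y) = 0" for y
    unfolding N_def by (simp add: vsimps XX ar algebra_simps)
  have NNm: "N ** N = 0" by (rule mat_eqI) (simp add: NN vsimps)
  define Q where "Q t = exp (r * t) *\<^sub>R (mat 1 + t *\<^sub>R N)" for t
  have Qv: "Q t *v y = exp (r * t) *\<^sub>R (y + t *\<^sub>R (N *v y))" for t y
    unfolding Q_def by (simp add: vsimps)
  have dQ: "(Q has_vector_derivative X ** Q t) (at t)" for t
  proof -
    have g: "((\<lambda>t. mat 1 + t *\<^sub>R N) has_vector_derivative N) (at t)"
      using has_vector_derivative_add[OF has_vector_derivative_const has_vector_derivative_scaleR[OF DERIV_ident has_vector_derivative_const]]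
      by simp
    have "(Q has_vector_derivative (exp (r * t) *\<^sub>R N + (r * exp (r * t)) *\<^sub>R (mat 1 + t *\<^sub>R N))) (at t)"
      unfolding Q_def by (rule has_vector_derivative_scaleR[OF dexp g])
    moreover have "exp (r * t) *\<^sub>R N + (r * exp (r * t)) *\<^sub>R (mat 1 + t *\<^sub>R N) = X ** Q t"
      by (rule mat_eqI) (simp add: vsimps Qv XN NN algebra_simps)
    ultimately show ?thesis by simp
  qed
  have Q0: "Q 0 = mat 1" unfolding Q_def by simp
  have QX: "Q t ** X = X ** Q t" for t
    by (rule mat_eqI) (simp add: vsimps Qv XN NN algebra_simps)
  have Qinv: "Q (-t) ** Q t = mat 1" for t
  proof -
    have "Q (-t) ** Q t = (exp (r * -t) * exp (r * t)) *\<^sub>R ((mat 1 + (-t) *\<^sub>R N) ** (mat 1 + t *\<^sub>R N))"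
      unfolding Q_def by (simp add: matrix_scalar_ac scalar_matrix_assoc[symmetric])
    also have "exp (r * -t) * exp (r * t) = 1" by (simp add: exp_add[symmetric])
    also have "(mat 1 + (-t) *\<^sub>R N) ** (mat 1 + t *\<^sub>R N) = mat 1"
      by (rule mat_eqI) (simp add: vsimps NN algebra_simps)
    finally show ?thesis by simp
  qed
  have PQ: "P t = Q t" for t by (rule ode_unique[OF dP P0 dQ Q0 QX Qinv])
  show ?thesis
    unfolding parabolic_def
  proof (intro exI conjI allI impI)
    show "reparam (\<lambda>t. 1 * t)" by (rule reparam_lin) simp
    show "N ** N = 0" by (rule NNm)
    fix t x
    have "M (1 * t) *v x = (c t * exp (r * t)) *\<^sub>R (x + t *\<^sub>R (N *v x))"
      by (simp add: Mc PQ Qv vsimps)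
    moreover have "c t * exp (r * t) \<noteq> 0" using c0 by simp
    ultimately show "proj_eq (M (1 * t) *v x) (x + t *\<^sub>R (N *v x))"
      unfolding proj_eq_def by blast
  qed
qed

lemma case_pos:
  fixes M P :: "real \<Rightarrow> real^'n^'n" and X :: "real^'n^'n"
  assumes dP: "\<And>t. (P has_vector_derivative X ** P t) (at t)" and P0: "P 0 = mat 1"
  and XX: "\<And>y. X *v (X *v y) = a *\<^sub>R y + b *\<^sub>R (X *v y)"
  and disc: "b^2 + 4 * a > 0"
  and Mc: "\<And>t. M t = c t *\<^sub>R P t" and c0: "\<And>t. c t \<noteq> 0"
  shows "hyperbolic M"
proof -
  define sq where "sq = sqrt (b^2 + 4 * a)"
  have sq0: "sq > 0" unfolding sq_def using disc by simp
  have sq2: "sq * sq = b^2 + 4 * a" unfolding sq_def using disc by simp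
  define r1 where "r1 = (b + sq) / 2"
  define r2 where "r2 = (b - sq) / 2"
  have rb: "b = r1 + r2" unfolding r1_def r2_def by (simp add: field_simps)
  have ra: "a = - (r1 * r2)" unfolding r1_def r2_def using sq2 by (simp add: field_simps power2_eq_square)
  define d where "d = r1 - r2"
  have d0: "d \<noteq> 0" unfolding d_def r1_def r2_def using sq0 by simp
  have XX': "X *v (X *v y) = (- (r1 * r2)) *\<^sub>R y + (r1 + r2) *\<^sub>R (X *v y)" for y
    using XX[of y] unfolding ra rb .
  define E1 where "E1 = (1/d) *\<^sub>R (X - r2 *\<^sub>R mat 1)"
  define E2 where "E2 = (1/d) *\<^sub>R (r1 *\<^sub>R mat 1 - X)"
  have E1v: "E1 *v y = (1/d) *\<^sub>R (X *v y - r2 *\<^sub>R y)" for y unfolding E1_def by (simp add: vsimps)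
  have E2v: "E2 *v y = (1/d) *\<^sub>R (r1 *\<^sub>R y - X *v y)" for y unfolding E2_def by (simp add: vsimps)
  have sumE: "E1 *v y + E2 *v y = y" for y
  proof -
    have "E1 *v y + E2 *v y = (1/d) *\<^sub>R (d *\<^sub>R y)" unfolding E1v E2v d_def by (simp add: algebra_simps)
    then show ?thesis using d0 by simp
  qed
  have XE1: "X *v (E1 *v y) = r1 *\<^sub>R (E1 *v y)" for y
    unfolding E1v by (simp add: vsimps XX' algebra_simps)
  have XE2: "X *v (E2 *v y) = r2 *\<^sub>R (E2 *v y)" for y
    unfolding E2v by (simp add: vsimps XX' algebra_simps)
  have E1X: "E1 *v (X *v y) = X *v (E1 *v y)" for y
    unfolding E1v by (simp add: vsimps algebra_simps)
  have E2X: "E2 *v (X *v y) = X *v (E2 *v y)" for y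
    unfolding E2v by (simp add: vsimps algebra_simps)
  have E1E2: "E1 *v (E2 *v y) = 0" for y
    using E1v[of "E2 *v y"] XE2[of y] by simp
  have E2E1: "E2 *v (E1 *v y) = 0" for y
    using E2v[of "E1 *v y"] XE1[of y] by simp
  have E1E1: "E1 *v (E1 *v y) = E1 *v y" for y
    using arg_cong[OF sumE[of y], of "\<lambda>w. E1 *v w"] E1E2[of y] by (simp add: vsimps)
  have E2E2: "E2 *v (E2 *v y) = E2 *v y" for y
    using arg_cong[OF sumE[of y], of "\<lambda>w. E2 *v w"] E2E1[of y] by (simp add: vsimps)
  define Q where "Q t = exp (r1 * t) *\<^sub>R E1 + exp (r2 * t) *\<^sub>R E2" for t
  have Qv: "Q t *v y = exp (r1 * t) *\<^sub>R (E1 *v y) + exp (r2 * t) *\<^sub>R (E2 *v y)" for t y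
    unfolding Q_def by (simp add: vsimps)
  have dQ: "(Q has_vector_derivative X ** Q t) (at t)" for t
  proof -
    have "(Q has_vector_derivative (exp (r1 * t) *\<^sub>R 0 + (r1 * exp (r1 * t)) *\<^sub>R E1)
        + (exp (r2 * t) *\<^sub>R 0 + (r2 * exp (r2 * t)) *\<^sub>R E2)) (at t)"
      unfolding Q_def
      by (intro has_vector_derivative_add has_vector_derivative_scaleR dexp has_vector_derivative_const)
    moreover have "(exp (r1 * t) *\<^sub>R 0 + (r1 * exp (r1 * t)) *\<^sub>R E1)
        + (exp (r2 * t) *\<^sub>R 0 + (r2 * exp (r2 * t)) *\<^sub>R E2) = X ** Q t"
      by (rule mat_eqI) (simp add: vsimps Qv XE1 XE2 ac_simps)
    ultimately show ?thesis by simp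
  qed
  have Q0: "Q 0 = mat 1" by (rule mat_eqI) (simp add: Qv sumE)
  have QX: "Q t ** X = X ** Q t" for t
    by (rule mat_eqI) (simp add: vsimps Qv E1X E2X)
  have Qinv: "Q (-t) ** Q t = mat 1" for t
  proof (rule mat_eqI)
    fix y
    have e1: "exp (r1 * t) * exp (r1 * -t) = 1" by (simp add: exp_add[symmetric])
    have e2: "exp (r2 * t) * exp (r2 * -t) = 1" by (simp add: exp_add[symmetric])
    have "(Q (-t) ** Q t) *v y = (exp (r1 * t) * exp (r1 * -t)) *\<^sub>R (E1 *v y) + (exp (r2 * t) * exp (r2 * -t)) *\<^sub>R (E2 *v y)"
      by (simp only: matrix_vector_mul_assoc[symmetric] Qv matrix_vector_right_distrib
          matrix_vector_mult_scaleR E1E1 E2E2 E1E2 E2E1 scaleR_zero_right add_0_right add_0_left scaleR_scaleR)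
    also have "\<dots> = y" unfolding e1 e2 using sumE by simp
    finally show "(Q (-t) ** Q t) *v y = mat 1 *v y" by simp
  qed
  have PQ: "P t = Q t" for t by (rule ode_unique[OF dP P0 dQ Q0 QX Qinv])
  define A where "A = {v. E1 *v v = v}"
  define B where "B = {v. E2 *v v = v}"
  have subA: "subspace A" unfolding subspace_def A_def by (simp add: vsimps)
  have subB: "subspace B" unfolding subspace_def B_def by (simp add: vsimps)
  have AB0: "A \<inter> B = {0}"
  proof safe
    fix v assume "v \<in> A" "v \<in> B"
    then have "v = E1 *v (E2 *v v)" unfolding A_def B_def by simp
    then show "v = 0" using E1E2 by simp
  qed (auto simp: A_def B_def)
  have ABU: "{x + y | x y. x \<in> A \<and> y \<in> B} = UNIV"
  proof safe
    fix v :: "real^'n"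
    have "v = E1 *v v + E2 *v v" using sumE by simp
    moreover have "E1 *v v \<in> A" "E2 *v v \<in> B" unfolding A_def B_def using E1E1 E2E2 by auto
    ultimately show "\<exists>x y. v = x + y \<and> x \<in> A \<and> y \<in> B" by blast
  qed simp
  have dd: "r2 - r1 \<noteq> 0" using d0 unfolding d_def by simp
  show ?thesis
    unfolding hyperbolic_def
  proof (intro exI conjI allI impI)
    show "reparam (\<lambda>t. (1 / (r2 - r1)) * t)" by (rule reparam_lin) (use dd in simp)
    show "subspace A" "subspace B" "A \<inter> B = {0}" "{x + y | x y. x \<in> A \<and> y \<in> B} = UNIV"
      by (fact subA subB AB0 ABU)+
    fix x y t assume xA: "x \<in> A" and yB: "y \<in> B"
    define s where "s = (1 / (r2 - r1)) * t"
    have E1x: "E1 *v x = x" and E2y: "E2 *v y = y" using xA yB unfolding A_def B_def by auto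
    have E1y: "E1 *v y = 0" using E1E2[of y] E2y by simp
    have E2x: "E2 *v x = 0" using E2E1[of x] E1x by simp
    have es: "exp (r2 * s) = exp (r1 * s) * exp t"
    proof -
      have "r2 * s = r1 * s + t" unfolding s_def using dd by (simp add: field_simps)
      then show ?thesis by (simp add: exp_add)
    qed
    have "M s *v (x + y) = (c s * exp (r1 * s)) *\<^sub>R (x + exp t *\<^sub>R y)"
      by (simp add: Mc PQ Qv vsimps E1x E2y E1y E2x es algebra_simps)
    moreover have "c s * exp (r1 * s) \<noteq> 0" using c0 by simp
    ultimately show "proj_eq (M ((1 / (r2 - r1)) * t) *v (x + y)) (x + exp t *\<^sub>R y)"
      unfolding proj_eq_def s_def by blast
  qed
qed

lemma case_neg:
  fixes M P :: "real \<Rightarrow> real^'n^'n" and X :: "real^'n^'n"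
  assumes dP: "\<And>t. (P has_vector_derivative X ** P t) (at t)" and P0: "P 0 = mat 1"
  and XX: "\<And>y. X *v (X *v y) = a *\<^sub>R y + b *\<^sub>R (X *v y)"
  and disc: "b^2 + 4 * a < 0"
  and Mc: "\<And>t. M t = c t *\<^sub>R P t" and c0: "\<And>t. c t \<noteq> 0"
  and inj: "proj_injective M"
  shows False
proof -
  define r where "r = b / 2"
  define w where "w = sqrt (- (b^2 + 4 * a)) / 2"
  have w0: "w > 0" unfolding w_def using disc by simp
  have w2: "w * w = - (b^2 + 4 * a) / 4" unfolding w_def using disc
    by (simp add: field_simps)
  have ab: "a = - (r * r) - w * w" "b = 2 * r" using w2 unfolding r_def by (auto simp: field_simps power2_eq_square)
  have XX': "X *v (X *v y) = (- (r * r) - w * w) *\<^sub>R y + (2 * r) *\<^sub>R (X *v y)" for y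
    using XX[of y] unfolding ab .
  define J where "J = (1/w) *\<^sub>R (X - r *\<^sub>R mat 1)"
  have Jv: "J *v y = (1/w) *\<^sub>R (X *v y - r *\<^sub>R y)" for y unfolding J_def by (simp add: vsimps)
  have XJ: "X *v y = r *\<^sub>R y + w *\<^sub>R (J *v y)" for y unfolding Jv using w0 by (simp add: algebra_simps)
  have JJ: "J *v (J *v y) = - y" for y
  proof -
    have "J *v (J *v y) = (1/w * (1/w)) *\<^sub>R (X *v (X *v y) - (2 * r) *\<^sub>R (X *v y) + (r * r) *\<^sub>R y)"
      unfolding Jv by (simp add: vsimps algebra_simps)
    also have "\<dots> = (1/w * (1/w)) *\<^sub>R ((- (w * w)) *\<^sub>R y)" unfolding XX' by (simp add: algebra_simps)
    also have "\<dots> = - y" using w0 by simp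
    finally show ?thesis .
  qed
  have JX: "J *v (X *v y) = X *v (J *v y)" for y unfolding Jv by (simp add: vsimps algebra_simps)
  define Q where "Q t = exp (r * t) *\<^sub>R (cos (w * t) *\<^sub>R mat 1 + sin (w * t) *\<^sub>R J)" for t
  have Qv: "Q t *v y = exp (r * t) *\<^sub>R (cos (w * t) *\<^sub>R y + sin (w * t) *\<^sub>R (J *v y))" for t y
    unfolding Q_def by (simp add: vsimps)
  have dQ: "(Q has_vector_derivative X ** Q t) (at t)" for t
  proof -
    have dc: "((\<lambda>t. cos (w * t)) has_field_derivative (- (w * sin (w * t)))) (at t)"
      by (auto intro!: derivative_eq_intros)
    have ds: "((\<lambda>t. sin (w * t)) has_field_derivative (w * cos (w * t))) (at t)"
      by (auto intro!: derivative_eq_intros)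
    have g: "((\<lambda>t. cos (w * t) *\<^sub>R mat 1 + sin (w * t) *\<^sub>R J) has_vector_derivative
       (cos (w * t) *\<^sub>R 0 + (- (w * sin (w * t))) *\<^sub>R mat 1) + (sin (w * t) *\<^sub>R 0 + (w * cos (w * t)) *\<^sub>R J)) (at t)"
      by (intro has_vector_derivative_add has_vector_derivative_scaleR dc ds has_vector_derivative_const)
    have "(Q has_vector_derivative (exp (r * t) *\<^sub>R ((cos (w * t) *\<^sub>R 0 + (- (w * sin (w * t))) *\<^sub>R mat 1) + (sin (w * t) *\<^sub>R 0 + (w * cos (w * t)) *\<^sub>R J))
       + (r * exp (r * t)) *\<^sub>R (cos (w * t) *\<^sub>R mat 1 + sin (w * t) *\<^sub>R J))) (at t)"
      unfolding Q_def by (rule has_vector_derivative_scaleR[OF dexp g])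
    moreover have "exp (r * t) *\<^sub>R ((cos (w * t) *\<^sub>R 0 + (- (w * sin (w * t))) *\<^sub>R mat 1) + (sin (w * t) *\<^sub>R 0 + (w * cos (w * t)) *\<^sub>R J))
       + (r * exp (r * t)) *\<^sub>R (cos (w * t) *\<^sub>R mat 1 + sin (w * t) *\<^sub>R J) = X ** Q t"
    proof (rule mat_eqI)
      fix y
      have XJy: "X *v (J *v y) = r *\<^sub>R (J *v y) - w *\<^sub>R y" using XJ[of "J *v y"] JJ[of y] by simp
      show "(exp (r * t) *\<^sub>R ((cos (w * t) *\<^sub>R 0 + (- (w * sin (w * t))) *\<^sub>R mat 1) + (sin (w * t) *\<^sub>R 0 + (w * cos (w * t)) *\<^sub>R J))
       + (r * exp (r * t)) *\<^sub>R (cos (w * t) *\<^sub>R mat 1 + sin (w * t) *\<^sub>R J)) *v y = (X ** Q t) *v y"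
        unfolding matrix_vector_mul_assoc[symmetric] Qv
        by (simp add: vsimps XJy XJ[of y] algebra_simps)
    qed
    ultimately show ?thesis by simp
  qed
  have Q0: "Q 0 = mat 1" unfolding Q_def by simp
  have QX: "Q t ** X = X ** Q t" for t
    by (rule mat_eqI) (simp add: vsimps Qv JX)
  have Qinv: "Q (-t) ** Q t = mat 1" for t
  proof -
    have "Q (-t) ** Q t = (exp (r * -t) * exp (r * t)) *\<^sub>R ((cos (w * -t) *\<^sub>R mat 1 + sin (w * -t) *\<^sub>R J) ** (cos (w * t) *\<^sub>R mat 1 + sin (w * t) *\<^sub>R J))"
      unfolding Q_def by (simp add: matrix_scalar_ac scalar_matrix_assoc[symmetric])
    also have "exp (r * -t) * exp (r * t) = 1" by (simp add: exp_add[symmetric])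
    also have "(cos (w * -t) *\<^sub>R mat 1 + sin (w * -t) *\<^sub>R J) ** (cos (w * t) *\<^sub>R mat 1 + sin (w * t) *\<^sub>R J) = mat 1"
    proof (rule mat_eqI)
      fix y
      have "((cos (w * -t) *\<^sub>R mat 1 + sin (w * -t) *\<^sub>R J) ** (cos (w * t) *\<^sub>R mat 1 + sin (w * t) *\<^sub>R J)) *v y
          = (cos (t * w) * cos (t * w)) *\<^sub>R y + (sin (t * w) * sin (t * w)) *\<^sub>R y"
        by (simp add: vsimps JJ algebra_simps)
      also have "\<dots> = y" by (metis scaleR_add_left scaleR_one sin_cos_squared_add3)
      finally show "((cos (w * -t) *\<^sub>R mat 1 + sin (w * -t) *\<^sub>R J) ** (cos (w * t) *\<^sub>R mat 1 + sin (w * t) *\<^sub>R J)) *v y = mat 1 *v y"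
        by simp
    qed
    finally show ?thesis by simp
  qed
  have PQ: "P t = Q t" for t by (rule ode_unique[OF dP P0 dQ Q0 QX Qinv])
  define t0 where "t0 = pi / w"
  have t0pos: "t0 > 0" unfolding t0_def using w0 by simp
  have "P t0 = (- exp (r * t0)) *\<^sub>R mat 1"
    unfolding PQ Q_def t0_def using w0 by simp
  then have "M t0 = (- (c t0 * exp (r * t0)) / c 0) *\<^sub>R M 0"
    unfolding Mc P0 using c0[of 0] by simp
  moreover have "- (c t0 * exp (r * t0)) / c 0 \<noteq> 0" using c0 by simp
  ultimately have "t0 = 0" using inj unfolding proj_injective_def by blast
  then show False using t0pos by simp
qed

theorem lemma1p1:
  fixes M :: "real \<Rightarrow> real ^ 'n ^ 'n"
  assumes "linear_flow M"
  shows "parabolic M \<or> hyperbolic M"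
proof -
  have cont: "continuous_on UNIV M" and hom: "is_proj_hom M" and inj: "proj_injective M"
    using assms unfolding linear_flow_def by auto
  obtain P c where P: "continuous_on UNIV P" "\<And>s t. P (s+t) = P s ** P t" "P 0 = mat 1"
    "\<And>t. c t \<noteq> 0" "\<And>t. M t = c t *\<^sub>R P t"
    using normalize_flow[OF cont hom] by blast
  obtain X where X: "\<And>t. (P has_vector_derivative (X ** P t)) (at t)" "\<And>t. X ** P t = P t ** X"
    using flow_deriv[OF P(1) P(2) P(3)] by blast
  have H: "\<exists>a b. X *v (X *v u) = a *\<^sub>R u + b *\<^sub>R (X *v u)" if "good X u" for u
    by (rule flow_H[OF assms P(5) P(4) P(3) P(2) X(1) X(2) that])
  obtain a b where XX: "\<And>y. X *v (X *v y) = a *\<^sub>R y + b *\<^sub>R (X *v y)"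
    using main_quad[OF H] by blast
  consider "b^2 + 4 * a > 0" | "b^2 + 4 * a = 0" | "b^2 + 4 * a < 0" by linarith
  then show ?thesis
  proof cases
    case 1
    then show ?thesis using case_pos[OF X(1) P(3) XX 1 P(5) P(4)] by blast
  next
    case 2
    then show ?thesis using case_zero[OF X(1) P(3) XX 2 P(5) P(4)] by blast
  next
    case 3
    then show ?thesis using case_neg[OF X(1) P(3) XX 3 P(5) P(4) inj] by blast
  qed
qed

end
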